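(* Danzer's configuration $(35_4)$ is isomorphic to the combinatorial configuration $N(O_4)$ obtained by the $V$-construction from the Odd graph $O_4$.
   Context: Danzer's configuration: take seven 3-dimensional hyperplanes in general position (no five through a common point) in 4-dimensional projective space; they meet by fours in 35 points and by threes in 35 lines, a point being incident with a line iff the triple of hyperplanes defining the line is contained in the quadruple defining the point. Combinatorially: points are the 4-subsets and lines the 3-subsets of $\{1,\dots,7\}$, incidence is containment. The Odd graph $O_4$ is the Kneser graph $K(7,3)$: vertices are the 3-subsets of a 7-element set, adjacent iff disjoint. $V$-construction: for a regular graph $G$ in which no two distinct vertices have the same neighbourhood, $N(G)$ is the incidence structure whose points are the vertices of $G$, whose blocks are the neighbourhoods $N(v)$ of the vertices $v$, with incidence given by membership. Isomorphism of incidence structures means bijections on points and on blocks preserving incidence. *)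

theory Defs
  imports Main
begin

definition incidence_isomorphic ::
  "'p1 set \<Rightarrow> 'b1 set \<Rightarrow> ('p1 \<Rightarrow> 'b1 \<Rightarrow> bool) \<Rightarrow>
   'p2 set \<Rightarrow> 'b2 set \<Rightarrow> ('p2 \<Rightarrow> 'b2 \<Rightarrow> bool) \<Rightarrow> bool" where
  "incidence_isomorphic P1 B1 I1 P2 B2 I2 \<longleftrightarrow>
     (\<exists>f g. bij_betw f P1 P2 \<and> bij_betw g B1 B2 \<and>
            (\<forall>p\<in>P1. \<forall>b\<in>B1. I1 p b \<longleftrightarrow> I2 (f p) (g b)))"

text \<open>Danzer's configuration, combinatorial model: points are the 4-subsets, lines the
3-subsets of {1..7}; a point is incident with a line iff the line is contained in it.\<close>

definition danzer_points :: "nat set set" where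
  "danzer_points = {A. A \<subseteq> {1..7} \<and> card A = 4}"

definition danzer_lines :: "nat set set" where
  "danzer_lines = {L. L \<subseteq> {1..7} \<and> card L = 3}"

definition danzer_incident :: "nat set \<Rightarrow> nat set \<Rightarrow> bool" where
  "danzer_incident p l \<longleftrightarrow> l \<subseteq> p"

definition kneser_vertices :: "nat \<Rightarrow> nat \<Rightarrow> nat set set" where
  "kneser_vertices n k = {A. A \<subseteq> {1..n} \<and> card A = k}"

definition kneser_adj :: "nat set \<Rightarrow> nat set \<Rightarrow> bool" where
  "kneser_adj A B \<longleftrightarrow> A \<inter> B = {}"

definition odd_graph_vertices :: "nat \<Rightarrow> nat set set" where
  "odd_graph_vertices k = kneser_vertices (2 * k - 1) (k - 1)"

definition nbhd :: "'a set \<Rightarrow> ('a \<Rightarrow> 'a \<Rightarrow> bool) \<Rightarrow> 'a \<Rightarrow> 'a set" where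
  "nbhd V E v = {u \<in> V. E v u}"

definition V_points :: "'a set \<Rightarrow> ('a \<Rightarrow> 'a \<Rightarrow> bool) \<Rightarrow> 'a set" where
  "V_points V E = V"

definition V_blocks :: "'a set \<Rightarrow> ('a \<Rightarrow> 'a \<Rightarrow> bool) \<Rightarrow> 'a set set" where
  "V_blocks V E = nbhd V E ` V"

definition V_incident :: "'a \<Rightarrow> 'a set \<Rightarrow> bool" where
  "V_incident x b \<longleftrightarrow> x \<in> b"

end

theory Submission
  imports Defs
begin

lemma card_U: "card {1..(7::nat)} = 7" by simp

lemma ex_cover:
  assumes L: "L \<subseteq> {1..7::nat}" "card L = 3" and x: "x \<in> {1..7}" "x \<notin> L"
  shows "\<exists>A. A \<subseteq> {1..7} \<and> card A = 3 \<and> L \<inter> A = {} \<and> x \<in> A"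
proof -
  let ?C = "{1..7::nat} - L"
  have cC: "card ?C = 4" using L by (simp add: card_Diff_subset finite_subset)
  have "card (?C - {x}) = 3" using cC x by simp
  then obtain y where y: "y \<in> ?C - {x}" by (metis card.empty ex_in_conv numeral_3_eq_3 old.nat.distinct(1))
  have c3: "card (?C - {y}) = 3" using cC y by simp
  have "?C - {y} \<subseteq> {1..7}" by blast
  moreover have "L \<inter> (?C - {y}) = {}" by blast
  moreover have "x \<in> ?C - {y}" using y x by blast
  ultimately show ?thesis using c3 by blast
qed

lemma union_nbhd:
  assumes L: "L \<subseteq> {1..7::nat}" "card L = 3"
  shows "\<Union> (nbhd (kneser_vertices 7 3) kneser_adj L) = {1..7} - L"
proof
  show "\<Union> (nbhd (kneser_vertices 7 3) kneser_adj L) \<subseteq> {1..7} - L"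
    by (auto simp: nbhd_def kneser_vertices_def kneser_adj_def)
  show "{1..7} - L \<subseteq> \<Union> (nbhd (kneser_vertices 7 3) kneser_adj L)"
  proof
    fix x assume "x \<in> {1..(7::nat)} - L"
    then obtain A where "A \<subseteq> {1..7} \<and> card A = 3 \<and> L \<inter> A = {} \<and> x \<in> A"
      using ex_cover[OF L] by blast
    thus "x \<in> \<Union> (nbhd (kneser_vertices 7 3) kneser_adj L)"
      by (auto simp: nbhd_def kneser_vertices_def kneser_adj_def)
  qed
qed

lemma compl_card: "A \<subseteq> {1..7::nat} \<Longrightarrow> card A = k \<Longrightarrow> card ({1..7} - A) = 7 - k"
  by (simp add: card_Diff_subset finite_subset)

lemma f_bij: "bij_betw (\<lambda>P. {1..7::nat} - P) danzer_points (kneser_vertices 7 3)"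
proof (rule bij_betw_byWitness[where f' = "\<lambda>P. {1..7::nat} - P"])
  show "\<forall>a\<in>danzer_points. {1..7} - ({1..7} - a) = a" unfolding danzer_points_def by blast
  show "\<forall>a\<in>kneser_vertices 7 3. {1..7} - ({1..7} - a) = a" unfolding kneser_vertices_def by blast
  show "(\<lambda>P. {1..7} - P) ` danzer_points \<subseteq> kneser_vertices 7 3"
  proof
    fix y assume "y \<in> (\<lambda>P. {1..7::nat} - P) ` danzer_points"
    then obtain P where P: "P \<subseteq> {1..7}" "card P = 4" "y = {1..7} - P"
      unfolding danzer_points_def by blast
    have "card y = 3" using compl_card[OF P(1,2)] P(3) by simp
    thus "y \<in> kneser_vertices 7 3" using P(3) unfolding kneser_vertices_def by blast
  qed
  show "(\<lambda>P. {1..7} - P) ` kneser_vertices 7 3 \<subseteq> danzer_points"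
  proof
    fix y assume "y \<in> (\<lambda>P. {1..7::nat} - P) ` kneser_vertices 7 3"
    then obtain P where P: "P \<subseteq> {1..7}" "card P = 3" "y = {1..7} - P"
      unfolding kneser_vertices_def by blast
    have "card y = 4" using compl_card[OF P(1,2)] P(3) by simp
    thus "y \<in> danzer_points" using P(3) unfolding danzer_points_def by blast
  qed
qed

theorem corollary3p5:
  shows "incidence_isomorphic danzer_points danzer_lines danzer_incident
           (V_points (odd_graph_vertices 4) kneser_adj)
           (V_blocks (odd_graph_vertices 4) kneser_adj) V_incident"
proof -
  let ?U = "{1..7::nat}"
  let ?V = "kneser_vertices 7 3"
  have OV: "odd_graph_vertices 4 = ?V" by (simp add: odd_graph_vertices_def)
  have VL: "?V = danzer_lines" unfolding kneser_vertices_def danzer_lines_def by (rule refl)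
  have f: "bij_betw (\<lambda>P. ?U - P) danzer_points ?V" by (rule f_bij)
  have inj: "inj_on (nbhd ?V kneser_adj) danzer_lines"
  proof (rule inj_onI)
    fix L L' assume L: "L \<in> danzer_lines" and L': "L' \<in> danzer_lines"
      and e: "nbhd ?V kneser_adj L = nbhd ?V kneser_adj L'"
    have "?U - L = ?U - L'"
      using union_nbhd[of L] union_nbhd[of L'] L L' e unfolding danzer_lines_def by simp
    thus "L = L'" using L L' unfolding danzer_lines_def by blast
  qed
  have g: "bij_betw (nbhd ?V kneser_adj) danzer_lines (V_blocks (odd_graph_vertices 4) kneser_adj)"
    using inj unfolding bij_betw_def V_blocks_def OV VL by blast
  have inc: "\<forall>p\<in>danzer_points. \<forall>b\<in>danzer_lines.
      danzer_incident p b \<longleftrightarrow> V_incident (?U - p) (nbhd ?V kneser_adj b)"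
  proof (intro ballI)
    fix p b assume p: "p \<in> danzer_points" and b: "b \<in> danzer_lines"
    have pV: "?U - p \<in> ?V" using f p unfolding bij_betw_def by blast
    have "b \<subseteq> ?U" using b unfolding danzer_lines_def by blast
    thus "danzer_incident p b \<longleftrightarrow> V_incident (?U - p) (nbhd ?V kneser_adj b)"
      using pV unfolding danzer_incident_def V_incident_def nbhd_def kneser_adj_def by blast
  qed
  show ?thesis unfolding incidence_isomorphic_def V_points_def
    apply (rule exI[of _ "\<lambda>P. ?U - P"], rule exI[of _ "nbhd ?V kneser_adj"])
    using f g inc OV by simp
qed

end
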